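(* Let $p_1,p_2>2$ be distinct primes, let $m_1=p_1^{\alpha_1}p_2^{\alpha_2}$ and $m_2=p_1^{\beta_1}p_2^{\beta_2}$ with $\alpha_1,\alpha_2,\beta_1,\beta_2$ positive integers. If $m_1$ is good and $m_1\mid m_2$, then $m_2$ is good.
   Context: For $m=p_1^{\alpha_1}p_2^{\alpha_2}$ with $p_1,p_2>2$ distinct primes and $\alpha_1,\alpha_2\ge1$: let $t=\mathrm{ord}_m(2)$ (the multiplicative order of $2$ modulo $m$) and let $\gamma\in\mathbb{F}_{2^t}^*$ be a primitive $m$th root of unity. The canonical set of $m$ is $S_m=\{s_{01},s_{10},s_{11}\}\subseteq\mathbb{Z}_m$, where for $\sigma=(\sigma_1,\sigma_2)\in\{0,1\}^2\setminus\{(0,0)\}$, $s_\sigma$ is the unique element of $\mathbb{Z}_m$ with $s_\sigma\equiv\sigma_1 \pmod{p_1^{\alpha_1}}$ and $s_\sigma\equiv \sigma_2\pmod{p_2^{\alpha_2}}$. An $S_m$-decoding polynomial is a polynomial $P(X)\in\mathbb{F}_{2^t}[X]$ such that $P(\gamma^s)=0$ for every $s\in S_m$ and $P(1)=1$. The number $m$ is called good if there exists an $S_m$-decoding polynomial with fewer than $4$ monomials (nonzero terms). *)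

theory Defs
  imports "HOL-Number_Theory.Number_Theory" "HOL-Computational_Algebra.Polynomial" "HOL-Library.Cardinality"
begin

definition s_sigma :: "nat \<Rightarrow> nat \<Rightarrow> nat \<Rightarrow> nat \<Rightarrow> nat" where
  "s_sigma q1 q2 \<sigma>1 \<sigma>2 = (THE s. s < q1 * q2 \<and> s mod q1 = \<sigma>1 \<and> s mod q2 = \<sigma>2)"

definition canonical_set :: "nat \<Rightarrow> nat \<Rightarrow> nat \<Rightarrow> nat \<Rightarrow> nat set" where
  "canonical_set p1 a1 p2 a2 =
     {s_sigma (p1^a1) (p2^a2) 0 1, s_sigma (p1^a1) (p2^a2) 1 0, s_sigma (p1^a1) (p2^a2) 1 1}"

definition primitive_root_of_unity :: "nat \<Rightarrow> 'a::field \<Rightarrow> bool" where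
  "primitive_root_of_unity m \<gamma> \<longleftrightarrow> \<gamma> ^ m = 1 \<and> (\<forall>k. 0 < k \<and> k < m \<longrightarrow> \<gamma> ^ k \<noteq> 1)"

definition num_monomials :: "'a::zero poly \<Rightarrow> nat" where
  "num_monomials P = card {i. coeff P i \<noteq> 0}"

definition decoding_poly :: "'a::field \<Rightarrow> nat set \<Rightarrow> 'a poly \<Rightarrow> bool" where
  "decoding_poly \<gamma> S P \<longleftrightarrow> (\<forall>s\<in>S. poly P (\<gamma> ^ s) = 0) \<and> poly P 1 = 1"

definition good_wrt :: "'a::field \<Rightarrow> nat \<Rightarrow> nat \<Rightarrow> nat \<Rightarrow> nat \<Rightarrow> bool" where
  "good_wrt \<gamma> p1 a1 p2 a2 \<longleftrightarrow>
     (\<exists>P. decoding_poly \<gamma> (canonical_set p1 a1 p2 a2) P \<and> num_monomials P < 4)"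

end

theory Submission
  imports Defs "HOL-Library.Z2" "Berlekamp_Zassenhaus.Finite_Field"
begin


lemma card_of_nat_zero: "of_nat CARD('a::{finite,ring_1}) = (0::'a)"
proof -
  have surj: "(\<lambda>y. y + (1::'a)) ` UNIV = UNIV"
  proof (rule surjI)
    fix x :: 'a show "(x - 1) + 1 = x" by simp
  qed
  have "(\<Sum>y\<in>UNIV. y + (1::'a)) = (\<Sum>y\<in>(\<lambda>y. y + 1) ` UNIV. y)"
    by (subst sum.reindex) (auto simp: inj_on_def)
  also have "\<dots> = (\<Sum>y\<in>UNIV. y)" by (simp only: surj)
  finally show ?thesis by (simp add: sum.distrib)
qed

lemma char2: assumes "CARD('a::{finite,field}) = 2 ^ t" shows "(2::'a) = 0"
proof -
  have "(of_nat (2^t) :: 'a) = 0" using card_of_nat_zero[where 'a='a] assms by simp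
  then show ?thesis by simp
qed

definition ob :: "bit \<Rightarrow> 'a::field" where "ob b = (if b = 0 then 0 else 1)"

lemma bit_cases2: "(b::bit) = 0 \<or> b = 1" by auto

lemma ob0[simp]: "ob 0 = 0" by (simp add: ob_def)
lemma ob1[simp]: "ob 1 = 1" by (simp add: ob_def)

lemma ob_add: assumes "(2::'a::field) = 0" shows "ob (x + y) = (ob x + ob y :: 'a)"
proof -
  have one: "(1::'a) + 1 = 0" using assms by (metis one_add_one)
  show ?thesis using bit_cases2[of x] bit_cases2[of y] one by auto
qed

lemma ob_mult: "ob (x * y) = (ob x * ob y :: 'a::field)"
  using bit_cases2[of x] bit_cases2[of y] by auto

lemma ob_hom: assumes "(2::'a::field) = 0" shows "comm_ring_hom (ob :: bit \<Rightarrow> 'a)"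
proof
  fix x y :: bit
  show "ob (x + y) = (ob x + ob y :: 'a)" by (rule ob_add[OF assms])
  show "ob (x * y) = (ob x * ob y :: 'a)" by (rule ob_mult)
qed simp_all

lemma mp_xm1:
  assumes c2a: "(2::'a::field) = 0"
  shows "map_poly (ob :: bit \<Rightarrow> 'a) (monom 1 m - 1) = monom 1 m - 1"
proof -
  interpret ha: map_poly_comm_ring_hom "ob :: bit \<Rightarrow> 'a"
    using ob_hom[OF c2a] by (simp add: map_poly_comm_ring_hom_def)
  show ?thesis
    by (simp only: ha.hom_minus ha.base.map_poly_hom_monom ha.hom_one ha.base.hom_one)
qed



lemma card_bit': "card (UNIV :: bit set) = 2"
proof -
  have u: "(UNIV :: bit set) = {0,1}" by auto
  have "card {0::bit, 1} = 2" by simp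
  then show ?thesis by (subst u)
qed

lemma card_deg_less:
  assumes "d > 0"
  shows "card {r :: bit poly. degree r < d} = 2 ^ d"
proof -
  have fin: "finite (UNIV :: bit set)" using card_bit' card.infinite by fastforce
  let ?L = "{xs :: bit list. set xs \<subseteq> UNIV \<and> length xs = d}"
  have "bij_betw Poly ?L {r :: bit poly. degree r < d}"
  proof (rule bij_betw_imageI)
    show "inj_on Poly ?L"
    proof (rule inj_onI)
      fix xs ys assume xs: "xs \<in> ?L" and ys: "ys \<in> ?L" and e: "Poly xs = Poly ys"
      have "\<forall>i. nth_default 0 xs i = nth_default 0 ys i" using e by (metis coeff_Poly_eq)
      then show "xs = ys" using xs ys
        by (intro nth_equalityI) (simp, metis (mono_tags, lifting) mem_Collect_eq nth_default_nth)
    qed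
    show "Poly ` ?L = {r. degree r < d}"
    proof
      show "Poly ` ?L \<subseteq> {r. degree r < d}"
      proof
        fix r assume "r \<in> Poly ` ?L"
        then obtain xs where xs: "length xs = d" "r = Poly xs" by auto
        have "degree r \<le> d - 1"
          by (rule degree_le) (use xs assms in \<open>auto simp: nth_default_def\<close>)
        then show "r \<in> {r. degree r < d}" using assms by auto
      qed
      show "{r. degree r < d} \<subseteq> Poly ` ?L"
      proof
        fix r :: "bit poly" assume r: "r \<in> {r. degree r < d}"
        have "r = Poly (map (coeff r) [0..<d])"
        proof (rule poly_eqI)
          fix n
          show "coeff r n = coeff (Poly (map (coeff r) [0..<d])) n"
            using r by (auto simp: nth_default_def coeff_eq_0)
        qed
        then show "r \<in> Poly ` ?L" by force
      qed
    qed
  qed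
  then have "card {r :: bit poly. degree r < d} = card ?L" by (metis bij_betw_same_card)
  also have "\<dots> = 2 ^ d" by (subst card_lists_length_eq) (auto simp: card_bit' fin)
  finally show ?thesis .
qed



lemma pow_mod_prim:
  assumes "(\<gamma>::'a::field) ^ m = 1"
  shows "\<gamma> ^ n = \<gamma> ^ (n mod m)"
proof -
  have "\<gamma> ^ n = \<gamma> ^ (m * (n div m) + n mod m)" by simp
  also have "\<dots> = (\<gamma> ^ m) ^ (n div m) * \<gamma> ^ (n mod m)"
    by (simp only: power_add power_mult)
  also have "\<dots> = \<gamma> ^ (n mod m)" by (simp only: assms power_one mult_1)
  finally show ?thesis .
qed

lemma prim_dvd:
  assumes "primitive_root_of_unity m (\<gamma>::'a::field)" "\<gamma> ^ n = 1" "m > 0"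
  shows "m dvd n"
proof -
  have "\<gamma> ^ n = \<gamma> ^ (n mod m)" using assms(1) pow_mod_prim
    unfolding primitive_root_of_unity_def by blast
  then have "\<gamma> ^ (n mod m) = 1" using assms(2) by simp
  moreover have "n mod m < m" using assms(3) by simp
  ultimately have "n mod m = 0" using assms(1) unfolding primitive_root_of_unity_def
    by (metis neq0_conv)
  then show ?thesis by auto
qed

lemma embed:
  fixes \<gamma> :: "'a::{field,finite}" and \<delta>0 :: "'b::{field,finite}"
  assumes cardA: "CARD('a) = 2 ^ ord m 2" and cardB: "CARD('b) = 2 ^ t2"
    and pa: "primitive_root_of_unity m \<gamma>" and pb: "primitive_root_of_unity m \<delta>0" and m: "m > 0"
  shows "\<exists>\<phi> i. comm_ring_hom \<phi> \<and> \<phi> \<gamma> = \<delta>0 ^ i"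
proof -
  have c2a: "(2::'a) = 0" using char2 cardA by blast
  have c2b: "(2::'b) = 0" using char2 cardB by blast
  interpret ha: map_poly_comm_ring_hom "ob :: bit \<Rightarrow> 'a"
    using ob_hom[OF c2a] by (simp add: map_poly_comm_ring_hom_def)
  interpret hb: map_poly_comm_ring_hom "ob :: bit \<Rightarrow> 'b"
    using ob_hom[OF c2b] by (simp add: map_poly_comm_ring_hom_def)
  define ea where "ea h = poly (map_poly (ob :: bit \<Rightarrow> 'a) h) \<gamma>" for h
  have ea_add: "ea (x + y) = ea x + ea y" for x y by (simp add: ea_def ha.hom_add)
  have ea_diff: "ea (x - y) = ea x - ea y" for x y by (simp add: ea_def ha.hom_minus)
  have ea_mult: "ea (x * y) = ea x * ea y" for x y by (simp add: ea_def ha.hom_mult)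
  have ea_1: "ea 1 = 1" by (simp add: ea_def)
  have ea_0: "ea 0 = 0" by (simp add: ea_def)
  have ea_X: "ea [:0,1:] = \<gamma>" by (simp add: ea_def hom_distribs)
  define h0 :: "bit poly" where "h0 = monom 1 m - 1"
  have mp_h0: "map_poly (ob :: bit \<Rightarrow> 'a) h0 = monom 1 m - 1" unfolding h0_def by (rule mp_xm1[OF c2a])
  have ea_h0: "ea h0 = 0" using pa
    by (simp add: ea_def mp_h0 poly_monom primitive_root_of_unity_def)
  have h0nz: "h0 \<noteq> 0"
  proof
    assume "h0 = 0"
    then have "coeff h0 m = 0" by simp
    then show False using m by (simp add: h0_def)
  qed
  define K where "K = {h. h \<noteq> 0 \<and> ea h = 0}"
  have "h0 \<in> K" using h0nz ea_h0 by (simp add: K_def)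
  then obtain f where fK: "f \<in> K" and fmin: "\<And>h. h \<in> K \<Longrightarrow> degree f \<le> degree h"
    using ex_has_least_nat[of "\<lambda>h. h \<in> K" h0 degree] by blast
  have kern: "f dvd h" if "ea h = 0" for h
  proof -
    have e: "h = f * (h div f) + h mod f" by simp
    have "ea (h mod f) = 0"
    proof -
      have "ea h = ea f * ea (h div f) + ea (h mod f)" by (subst e) (simp only: ea_add ea_mult)
      then show ?thesis using that fK by (simp add: K_def)
    qed
    moreover have "f \<noteq> 0" using fK by (simp add: K_def)
    ultimately have "h mod f = 0"
      using fmin degree_mod_less'[of f h] unfolding K_def by force
    then show ?thesis by (simp add: mod_eq_0_iff_dvd)
  qed
  define d where "d = degree f"
  have fnz: "f \<noteq> 0" using fK by (simp add: K_def)
  have dpos: "d > 0"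
  proof (rule ccontr)
    assume "\<not> d > 0"
    then have "degree f = 0" by (simp add: d_def)
    then have "f = [:coeff f 0:]" by (metis degree_0_id)
    moreover have "coeff f 0 \<noteq> 0" using fnz \<open>degree f = 0\<close> by (metis leading_coeff_0_iff)
    then have "coeff f 0 = 1" by simp
    ultimately have "f = 1" by (simp add: one_pCons)
    then show False using fK ea_1 by (simp add: K_def)
  qed
  define F where "F = range ea"
  have finF: "finite F" by simp
  have cardF: "card F = 2 ^ d"
  proof -
    have "bij_betw ea {r. degree r < d} F"
    proof (rule bij_betw_imageI)
      show "inj_on ea {r. degree r < d}"
      proof (rule inj_onI)
        fix x y assume x: "x \<in> {r. degree r < d}" and y: "y \<in> {r. degree r < d}" and e: "ea x = ea y"
        have "f dvd x - y" using e ea_diff kern by simp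
        moreover have "degree (x - y) < d" using x y degree_diff_le_max[of x y] by auto
        ultimately have "x - y = 0" using dvd_imp_degree_le[of f "x - y"] d_def by fastforce
        then show "x = y" by simp
      qed
      show "ea ` {r. degree r < d} = F"
      proof
        show "ea ` {r. degree r < d} \<subseteq> F" by (auto simp: F_def)
        show "F \<subseteq> ea ` {r. degree r < d}"
        proof
          fix z assume "z \<in> F"
          then obtain h where h: "z = ea h" by (auto simp: F_def)
          have e: "h = f * (h div f) + h mod f" by simp
          have "ea h = ea f * ea (h div f) + ea (h mod f)" by (subst e) (simp only: ea_add ea_mult)
          then have "ea h = ea (h mod f)" using fK by (simp add: K_def)
          moreover have "degree (h mod f) < d"
            using degree_mod_less[OF fnz, of h] dpos d_def by auto
          ultimately show "z \<in> ea ` {r. degree r < d}" using h by blast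
        qed
      qed
    qed
    then show ?thesis using card_deg_less[OF dpos] by (simp add: bij_betw_same_card)
  qed
  have gnz: "\<gamma> \<noteq> 0" using pa m by (auto simp: primitive_root_of_unity_def power_0_left)
  have gF: "\<gamma> \<in> F" using ea_X by (auto simp: F_def)
  have mulF: "x * y \<in> F" if "x \<in> F" "y \<in> F" for x y
    using that ea_mult by (auto simp: F_def) (metis rangeI)
  have zF: "0 \<in> F" using ea_0 by (auto simp: F_def)
  define F0 where "F0 = F - {0}"
  have finF0: "finite F0" by (simp add: F0_def)
  have img: "(\<lambda>y. \<gamma> * y) ` F0 = F0"
    by (rule endo_inj_surj) (use finF0 gnz gF mulF in \<open>auto simp: F0_def inj_on_def\<close>)
  have "prod id F0 = prod id ((\<lambda>y. \<gamma> * y) ` F0)" using img by simp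
  also have "\<dots> = prod (\<lambda>y. \<gamma> * y) F0"
    by (subst prod.reindex) (use gnz in \<open>auto simp: inj_on_def\<close>)
  also have "\<dots> = \<gamma> ^ card F0 * prod id F0" by (simp add: prod.distrib)
  finally have "\<gamma> ^ card F0 * prod id F0 = 1 * prod id F0" by simp
  moreover have "prod id F0 \<noteq> 0" using finF0 by (simp add: F0_def)
  ultimately have gp: "\<gamma> ^ card F0 = 1" by simp
  have "card F0 = 2 ^ d - 1" using cardF zF finF by (simp add: F0_def card_Diff_singleton)
  then have "m dvd 2 ^ d - 1" using prim_dvd[OF pa _ m] gp by simp
  then have "[2 ^ d = 1] (mod m)" by (subst cong_altdef_nat) auto
  then have "ord m 2 dvd d" by (simp add: ord_divides')
  then have "ord m 2 \<le> d" using dpos by (simp add: dvd_imp_le)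
  then have "CARD('a) \<le> card F" using cardA cardF by simp
  moreover have "card F \<le> CARD('a)" by (rule card_mono) auto
  ultimately have "card F = CARD('a)" by linarith
  then have FU: "F = UNIV" by (rule card_eq_UNIV_imp_eq_UNIV[rotated]) simp
  define fb where "fb = map_poly (ob :: bit \<Rightarrow> 'b) f"
  have lcf: "lead_coeff f = 1" using fnz bit_not_zero_iff leading_coeff_0_iff by metis
  have degfb: "degree fb = d"
    unfolding fb_def d_def by (rule degree_map_poly) (use lcf fnz in auto)
  obtain k where hk: "h0 = f * k" using kern[OF ea_h0] by (metis dvdE)
  define g where "g = map_poly (ob :: bit \<Rightarrow> 'b) k"
  have Hfg: "monom 1 m - 1 = fb * g"
  proof -
    have "map_poly (ob :: bit \<Rightarrow> 'b) h0 = monom 1 m - 1" unfolding h0_def by (rule mp_xm1[OF c2b])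
    then show ?thesis using hk by (simp add: fb_def g_def hb.hom_mult)
  qed
  have Hnz: "(monom (1::'b) m - 1) \<noteq> 0"
  proof
    assume "(monom (1::'b) m - 1) = 0"
    then have "coeff (monom (1::'b) m - 1) m = 0" by simp
    then show False using m by simp
  qed
  have degH: "degree (monom (1::'b) m - 1) = m"
  proof (rule antisym)
    show "degree (monom (1::'b) m - 1) \<le> m" by (rule degree_diff_le) (auto simp: degree_monom_eq)
    show "m \<le> degree (monom (1::'b) m - 1)" by (rule le_degree) (use m in simp)
  qed
  have gnz2: "g \<noteq> 0" using Hnz Hfg by auto
  have fbnz: "fb \<noteq> 0" using Hnz Hfg by auto
  have "degree (fb * g) = d + degree g" using degfb gnz2 fbnz by (simp add: degree_mult_eq)
  then have degg: "degree g = m - d" using degH Hfg by simp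
  have "\<exists>i<m. poly fb (\<delta>0 ^ i) = 0"
  proof (rule ccontr)
    assume neg: "\<not> ?thesis"
    have roots: "poly g (\<delta>0 ^ i) = 0" if "i < m" for i
    proof -
      have "(\<delta>0 ^ i) ^ m = (\<delta>0 ^ m) ^ i" by (simp only: power_mult[symmetric] mult.commute)
      then have "(\<delta>0 ^ i) ^ m = 1" using pb by (simp add: primitive_root_of_unity_def)
      then have "poly (monom 1 m - 1) (\<delta>0 ^ i) = 0" by (simp add: poly_monom)
      then show ?thesis using that Hfg neg by auto
    qed
    have inj: "inj_on (\<lambda>i. \<delta>0 ^ i) {..<m}"
    proof (rule inj_onI)
      fix i j assume i: "i \<in> {..<m}" and j: "j \<in> {..<m}" and e: "\<delta>0 ^ i = \<delta>0 ^ j"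
      have dnz: "\<delta>0 \<noteq> 0" using pb m by (auto simp: primitive_root_of_unity_def power_0_left)
      show "i = j"
      proof (rule ccontr)
        assume "i \<noteq> j"
        then consider "i < j" | "j < i" by linarith
        then show False
        proof cases
          case 1
          have "\<delta>0 ^ j = \<delta>0 ^ i * \<delta>0 ^ (j - i)" using 1 by (simp flip: power_add)
          then have "\<delta>0 ^ (j - i) = 1" using e dnz by simp
          then show False using pb 1 j unfolding primitive_root_of_unity_def by auto
        next
          case 2
          have "\<delta>0 ^ i = \<delta>0 ^ j * \<delta>0 ^ (i - j)" using 2 by (simp flip: power_add)
          then have "\<delta>0 ^ (i - j) = 1" using e dnz by simp
          then show False using pb 2 i unfolding primitive_root_of_unity_def by auto
        qed
      qed
    qed
    have "m = card ((\<lambda>i. \<delta>0 ^ i) ` {..<m})" using inj by (simp add: card_image)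
    also have "\<dots> \<le> card {x. poly g x = 0}"
      by (rule card_mono) (use poly_roots_finite[OF gnz2] roots in auto)
    also have "\<dots> \<le> degree g" by (rule card_poly_roots_bound[OF gnz2])
    finally show False using degg dpos m by linarith
  qed
  then obtain i where iroot: "poly fb (\<delta>0 ^ i) = 0" by blast
  define \<delta> where "\<delta> = \<delta>0 ^ i"
  define eb where "eb h = poly (map_poly (ob :: bit \<Rightarrow> 'b) h) \<delta>" for h
  have eb_add: "eb (x + y) = eb x + eb y" for x y by (simp add: eb_def hb.hom_add)
  have eb_mult: "eb (x * y) = eb x * eb y" for x y by (simp add: eb_def hb.hom_mult)
  have eb_diff: "eb (x - y) = eb x - eb y" for x y by (simp add: eb_def hb.hom_minus)
  have wd: "eb x = eb y" if "ea x = ea y" for x y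
  proof -
    have "f dvd x - y" using that ea_diff kern by simp
    then obtain q where "x - y = f * q" by (metis dvdE)
    then have "eb (x - y) = 0" using iroot by (simp add: eb_def hb.hom_mult fb_def \<delta>_def)
    then show ?thesis using eb_diff by simp
  qed
  define \<phi> where "\<phi> x = eb (SOME h. ea h = x)" for x
  have surj: "\<exists>h. ea h = x" for x using FU by (metis F_def surj_def)
  have phi_ea: "\<phi> (ea h) = eb h" for h
  proof -
    have "ea (SOME h'. ea h' = ea h) = ea h" by (rule someI_ex) auto
    then show ?thesis unfolding \<phi>_def by (rule wd)
  qed
  have hom: "comm_ring_hom \<phi>"
  proof
    fix x y
    obtain hx hy where hx: "ea hx = x" and hy: "ea hy = y" using surj by metis
    have px: "\<phi> x = eb hx" using phi_ea[of hx] hx by simp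
    have py: "\<phi> y = eb hy" using phi_ea[of hy] hy by simp
    have "\<phi> (x + y) = eb (hx + hy)" using phi_ea[of "hx + hy"] hx hy ea_add by simp
    then show "\<phi> (x + y) = \<phi> x + \<phi> y" using px py eb_add by simp
    have "\<phi> (x * y) = eb (hx * hy)" using phi_ea[of "hx * hy"] hx hy ea_mult by simp
    then show "\<phi> (x * y) = \<phi> x * \<phi> y" using px py eb_mult by simp
  next
    show "\<phi> 1 = 1" using phi_ea[of 1] ea_1 by (simp add: eb_def)
  next
    show "\<phi> 0 = 0" using phi_ea[of 0] ea_0 by (simp add: eb_def)
  qed
  have "\<phi> \<gamma> = \<delta>" using phi_ea[of "[:0,1:]"] ea_X by (simp add: eb_def hom_distribs)
  then show ?thesis using hom \<delta>_def by blast
qed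



lemma s_unique:
  fixes q1 q2 :: nat
  assumes "coprime q1 q2" "s < q1 * q2" "s' < q1 * q2"
    "s mod q1 = s' mod q1" "s mod q2 = s' mod q2"
  shows "s = s'"
proof -
  have "[s = s'] (mod q1 * q2)" using assms
    by (intro coprime_cong_mult_nat) (auto simp: cong_def)
  then show ?thesis using assms cong_less_modulus_unique_nat by blast
qed

lemma s_spec:
  fixes q1 q2 :: nat
  assumes cop: "coprime q1 q2" and "\<sigma>1 < q1" "\<sigma>2 < q2"
  shows "s_sigma q1 q2 \<sigma>1 \<sigma>2 < q1 * q2 \<and> s_sigma q1 q2 \<sigma>1 \<sigma>2 mod q1 = \<sigma>1
         \<and> s_sigma q1 q2 \<sigma>1 \<sigma>2 mod q2 = \<sigma>2"
proof -
  obtain x where x: "[x = \<sigma>1] (mod q1)" "[x = \<sigma>2] (mod q2)"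
    using binary_chinese_remainder_nat[OF cop] by blast
  have pos: "q1 * q2 > 0" using assms by simp
  define y where "y = x mod (q1 * q2)"
  have y: "y < q1 * q2 \<and> y mod q1 = \<sigma>1 \<and> y mod q2 = \<sigma>2"
    using x pos assms unfolding y_def cong_def
    by (auto simp: mod_mod_cancel)
  have "\<exists>!s. s < q1 * q2 \<and> s mod q1 = \<sigma>1 \<and> s mod q2 = \<sigma>2"
    using y s_unique[OF cop] by metis
  then show ?thesis unfolding s_sigma_def by (rule theI')
qed

lemma s_red:
  fixes q1 q2 Q1 Q2 :: nat
  assumes cop: "coprime q1 q2" and cop2: "coprime Q1 Q2" and "\<sigma>1 < q1" "\<sigma>2 < q2"
    and d1: "q1 dvd Q1" and d2: "q2 dvd Q2" and "q1 \<le> Q1" "q2 \<le> Q2"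
  shows "s_sigma Q1 Q2 \<sigma>1 \<sigma>2 mod (q1 * q2) = s_sigma q1 q2 \<sigma>1 \<sigma>2"
proof -
  define s' where "s' = s_sigma Q1 Q2 \<sigma>1 \<sigma>2"
  have sp: "s' mod Q1 = \<sigma>1" "s' mod Q2 = \<sigma>2" using s_spec[OF cop2, of \<sigma>1 \<sigma>2] assms
    unfolding s'_def by auto
  have pos: "q1 * q2 > 0" using assms by simp
  have a: "s' mod (q1 * q2) mod q1 = \<sigma>1"
  proof -
    have "s' mod (q1 * q2) mod q1 = s' mod q1" by (simp add: mod_mod_cancel)
    also have "\<dots> = s' mod Q1 mod q1" using d1 by (simp add: mod_mod_cancel)
    finally show ?thesis using sp assms by simp
  qed
  have b: "s' mod (q1 * q2) mod q2 = \<sigma>2"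
  proof -
    have "s' mod (q1 * q2) mod q2 = s' mod q2" by (simp add: mod_mod_cancel)
    also have "\<dots> = s' mod Q2 mod q2" using d2 by (simp add: mod_mod_cancel)
    finally show ?thesis using sp assms by simp
  qed
  have sp2: "s_sigma q1 q2 \<sigma>1 \<sigma>2 < q1 * q2 \<and> s_sigma q1 q2 \<sigma>1 \<sigma>2 mod q1 = \<sigma>1
         \<and> s_sigma q1 q2 \<sigma>1 \<sigma>2 mod q2 = \<sigma>2" using s_spec[OF cop] assms by blast
  have "s' mod (q1 * q2) = s_sigma q1 q2 \<sigma>1 \<sigma>2"
  proof (rule s_unique[OF cop])
    show "s' mod (q1 * q2) < q1 * q2" using pos by simp
    show "s_sigma q1 q2 \<sigma>1 \<sigma>2 < q1 * q2" using sp2 by blast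
    show "s' mod (q1 * q2) mod q1 = s_sigma q1 q2 \<sigma>1 \<sigma>2 mod q1" using a sp2 by simp
    show "s' mod (q1 * q2) mod q2 = s_sigma q1 q2 \<sigma>1 \<sigma>2 mod q2" using b sp2 by simp
  qed
  then show ?thesis by (simp add: s'_def)
qed



lemma compose_poly:
  fixes \<phi> :: "'a::field \<Rightarrow> 'b::field" and P :: "'a poly" and N :: nat
  assumes hom: "comm_ring_hom \<phi>"
  defines "Q \<equiv> (\<Sum>j\<le>degree P. monom (\<phi> (coeff P j)) (N * j))"
  shows "\<phi> y = x ^ N \<Longrightarrow> poly Q x = \<phi> (poly P y)"
    and "num_monomials Q \<le> num_monomials P"
proof -
  interpret h: comm_ring_hom \<phi> by (rule hom)
  show "poly Q x = \<phi> (poly P y)" if "\<phi> y = x ^ N"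
  proof -
    have "poly Q x = (\<Sum>j\<le>degree P. \<phi> (coeff P j) * x ^ (N * j))"
      by (simp add: Q_def poly_sum poly_monom)
    also have "\<dots> = (\<Sum>j\<le>degree P. \<phi> (coeff P j) * (\<phi> y) ^ j)"
      using that by (simp add: power_mult)
    also have "\<dots> = \<phi> (\<Sum>j\<le>degree P. coeff P j * y ^ j)"
      by (simp add: h.hom_sum h.hom_mult h.hom_power)
    also have "\<dots> = \<phi> (poly P y)" by (simp add: poly_altdef)
    finally show ?thesis .
  qed
  have finP: "finite {j. coeff P j \<noteq> 0}"
    by (rule finite_subset[of _ "{..degree P}"]) (auto intro: le_degree)
  have sub: "{n. coeff Q n \<noteq> 0} \<subseteq> (\<lambda>j. N * j) ` {j. coeff P j \<noteq> 0}"
  proof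
    fix n assume "n \<in> {n. coeff Q n \<noteq> 0}"
    then have "(\<Sum>j\<le>degree P. coeff (monom (\<phi> (coeff P j)) (N * j)) n) \<noteq> 0"
      by (simp add: Q_def coeff_sum)
    then obtain j where "coeff (monom (\<phi> (coeff P j)) (N * j)) n \<noteq> 0"
      by (meson sum.neutral)
    then have "N * j = n" "coeff P j \<noteq> 0" by (auto simp: coeff_monom split: if_splits)
    then show "n \<in> (\<lambda>j. N * j) ` {j. coeff P j \<noteq> 0}" by auto
  qed
  have "card {n. coeff Q n \<noteq> 0} \<le> card ((\<lambda>j. N * j) ` {j. coeff P j \<noteq> 0})"
    by (rule card_mono[OF _ sub]) (use finP in auto)
  also have "\<dots> \<le> card {j. coeff P j \<noteq> 0}" by (rule card_image_le[OF finP])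
  finally show "num_monomials Q \<le> num_monomials P" by (simp add: num_monomials_def)
qed


theorem theorem3:
  fixes p1 p2 a1 a2 b1 b2 :: nat
    and \<gamma>1 :: "'a::{field,finite}" and \<gamma>2 :: "'b::{field,finite}"
  assumes "prime p1" "prime p2" "p1 > 2" "p2 > 2" "p1 \<noteq> p2"
    and "a1 \<ge> 1" "a2 \<ge> 1" "b1 \<ge> 1" "b2 \<ge> 1"
    and "CARD('a) = 2 ^ ord (p1^a1 * p2^a2) 2"
    and "CARD('b) = 2 ^ ord (p1^b1 * p2^b2) 2"
    and "primitive_root_of_unity (p1^a1 * p2^a2) \<gamma>1"
    and "primitive_root_of_unity (p1^b1 * p2^b2) \<gamma>2"
    and "good_wrt \<gamma>1 p1 a1 p2 a2"
    and "(p1^a1 * p2^a2) dvd (p1^b1 * p2^b2)"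
  shows "good_wrt \<gamma>2 p1 b1 p2 b2"
proof -
  note A = assms
  define q1 where "q1 = p1 ^ a1"
  define q2 where "q2 = p2 ^ a2"
  define Q1 where "Q1 = p1 ^ b1"
  define Q2 where "Q2 = p2 ^ b2"
  define m1 where "m1 = q1 * q2"
  define m2 where "m2 = Q1 * Q2"
  have cp: "coprime p1 p2" using A(1,2,5) by (rule primes_coprime)
  have cop1: "coprime q1 q2" and cop2: "coprime Q1 Q2" and cop3: "coprime q1 Q2"
    and cop4: "coprime q2 Q1"
    using cp coprime_commute[of p1 p2] by (simp_all add: q1_def q2_def Q1_def Q2_def)
  have gt1: "q1 > 1" unfolding q1_def by (rule one_less_power) (use A in auto)
  have gt2: "q2 > 1" unfolding q2_def by (rule one_less_power) (use A in auto)
  have gt3: "Q1 > 1" unfolding Q1_def by (rule one_less_power) (use A in auto)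
  have gt4: "Q2 > 1" unfolding Q2_def by (rule one_less_power) (use A in auto)
  note gt = gt1 gt2 gt3 gt4
  have dv: "m1 dvd m2" using A(15) by (simp only: m1_def m2_def q1_def q2_def Q1_def Q2_def)
  have d1: "q1 dvd Q1"
  proof -
    have "q1 dvd Q1 * Q2" using dv unfolding m1_def m2_def by (rule dvd_mult_left)
    then show ?thesis using cop3 by (simp add: coprime_dvd_mult_left_iff)
  qed
  have d2: "q2 dvd Q2"
  proof -
    have "q2 dvd Q1 * Q2" using dv unfolding m1_def m2_def by (rule dvd_mult_right)
    then have "q2 dvd Q2 * Q1" by (simp only: mult.commute)
    then show ?thesis using cop4 by (simp add: coprime_dvd_mult_left_iff)
  qed
  have l1: "q1 \<le> Q1" using d1 gt by (simp add: dvd_imp_le)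
  have l2: "q2 \<le> Q2" using d2 gt by (simp add: dvd_imp_le)
  have m1pos: "m1 > 0" and m2pos: "m2 > 0" using gt by (auto simp: m1_def m2_def)
  obtain k where mk: "m2 = m1 * k" using dv by (metis dvdE)
  have kpos: "k > 0" using mk m2pos by (cases k) auto
  have p1: "primitive_root_of_unity m1 \<gamma>1" using A(12) by (simp only: m1_def q1_def q2_def)
  have p2: "primitive_root_of_unity m2 \<gamma>2" using A(13) by (simp only: m2_def Q1_def Q2_def)
  have pd: "primitive_root_of_unity m1 (\<gamma>2 ^ k)"
    unfolding primitive_root_of_unity_def
  proof (intro conjI allI impI)
    have "(\<gamma>2 ^ k) ^ m1 = \<gamma>2 ^ m2" by (simp only: mk mult.commute[of m1 k] power_mult)
    then show "(\<gamma>2 ^ k) ^ m1 = 1" using p2 by (simp add: primitive_root_of_unity_def)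
    fix j assume j: "0 < j \<and> j < m1"
    have "0 < k * j" "k * j < m2" using j kpos mk by auto
    then show "(\<gamma>2 ^ k) ^ j \<noteq> 1" using p2
      by (simp add: primitive_root_of_unity_def flip: power_mult)
  qed
  obtain \<phi> i where hom: "comm_ring_hom \<phi>" and phg: "\<phi> \<gamma>1 = (\<gamma>2 ^ k) ^ i"
    using embed[OF _ _ p1 pd m1pos] A by (auto simp: m1_def q1_def q2_def)
  interpret h: comm_ring_hom \<phi> by (rule hom)
  obtain P where dec: "decoding_poly \<gamma>1 (canonical_set p1 a1 p2 a2) P" and nm: "num_monomials P < 4"
    using A by (auto simp: good_wrt_def)
  define N where "N = k * i"
  define Q where "Q = (\<Sum>j\<le>degree P. monom (\<phi> (coeff P j)) (N * j))"
  have Qev: "poly Q x = \<phi> (poly P y)" if "\<phi> y = x ^ N" for x y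
    using compose_poly(1)[OF hom, where P=P and N=N] that by (simp add: Q_def)
  have Qnm: "num_monomials Q < 4"
    using compose_poly(2)[OF hom, where P=P and N=N] nm by (simp add: Q_def)
  have g1m: "\<gamma>1 ^ m1 = 1" using p1 by (simp add: primitive_root_of_unity_def)
  have key: "poly Q (\<gamma>2 ^ s_sigma Q1 Q2 \<sigma>1 \<sigma>2) = 0"
    if s: "s_sigma q1 q2 \<sigma>1 \<sigma>2 \<in> canonical_set p1 a1 p2 a2" and "\<sigma>1 \<le> 1" "\<sigma>2 \<le> 1" for \<sigma>1 \<sigma>2
  proof -
    define s' where "s' = s_sigma Q1 Q2 \<sigma>1 \<sigma>2"
    have red: "s' mod m1 = s_sigma q1 q2 \<sigma>1 \<sigma>2" unfolding s'_def m1_def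
      by (rule s_red[OF cop1 cop2 _ _ d1 d2 l1 l2]) (use that gt in auto)
    have "\<phi> (\<gamma>1 ^ s') = ((\<gamma>2 ^ k) ^ i) ^ s'" by (simp add: h.hom_power phg)
    also have "\<dots> = \<gamma>2 ^ (k * i * s')" by (simp only: power_mult)
    also have "k * i * s' = s' * (k * i)" by simp
    also have "\<gamma>2 ^ (s' * (k * i)) = (\<gamma>2 ^ s') ^ N" by (simp only: power_mult N_def)
    finally have "\<phi> (\<gamma>1 ^ s') = (\<gamma>2 ^ s') ^ N" .
    then have "poly Q (\<gamma>2 ^ s') = \<phi> (poly P (\<gamma>1 ^ s'))" by (rule Qev)
    also have "\<gamma>1 ^ s' = \<gamma>1 ^ (s_sigma q1 q2 \<sigma>1 \<sigma>2)"
      using pow_mod_prim[OF g1m, of s'] red by simp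
    also have "poly P \<dots> = 0" using dec s by (simp add: decoding_poly_def)
    finally show ?thesis by (simp add: s'_def)
  qed
  have "decoding_poly \<gamma>2 (canonical_set p1 b1 p2 b2) Q"
    unfolding decoding_poly_def
  proof (intro conjI ballI)
    fix s assume "s \<in> canonical_set p1 b1 p2 b2"
    then show "poly Q (\<gamma>2 ^ s) = 0"
      using key[of 0 1] key[of 1 0] key[of 1 1]
      by (auto simp: canonical_set_def q1_def q2_def Q1_def Q2_def)
  next
    have "poly Q 1 = \<phi> (poly P 1)" by (rule Qev) simp
    then show "poly Q 1 = 1" using dec by (simp add: decoding_poly_def)
  qed
  then show ?thesis using Qnm by (auto simp: good_wrt_def)
qed

end
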